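(* Let $S$ be a commutative ring and $I\subseteq S$ an additive subgroup. Then: (1) the blowup $\mathrm{Bl}(I)=\mathrm{Bl}_S(I):=\bigcup_{k\ge 0}(I^k:I^k)_S$ is a subring of $S$; (2) if $R\subseteq S$ is a subring and $RI$ is an invertible ideal of $R$ within $S$, then $\mathrm{Bl}(I)\subseteq R$; (3) if for some $n\ge0$ the set $RI$ is an invertible ideal of $R=(I^n:I^n)_S$ within $S$, then $R=\mathrm{Bl}(I)$; (4) if $S$ is a number field and $I$ is finitely generated and non-zero, then there exists $n\ge 0$ such that $\mathrm{Bl}(I)=(I^n:I^n)_S$, and $\mathrm{Bl}(I)$ is an order.
   Context: For additive subgroups $I,J$ of a commutative ring $S$: $IJ$ is the set of finite sums $\sum x_iy_i$ with $x_i\in I$, $y_i\in J$; $(I:J)_S=\{x\in S: xJ\subseteq I\}$; $I^0=(I:I)_S$ and $I^{n+1}=I^n\cdot I$ for $n\ge0$. For a subring $R\subseteq S$, an invertible ideal of $R$ within $S$ is an $R$-submodule $I\subseteq S$ for which there is an $R$-submodule $J\subseteq S$ with $IJ=R$. A number field is a finite-dimensional field extension of $\mathbb{Q}$; an order is a domain whose additive group is isomorphic to $\mathbb{Z}^n$ for some $n\ge 0$. *)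

theory Defs
  imports Main
begin

text \<open>Ambient commutative ring S is the type 'a. Subsets of 'a play the role of
additive subgroups / subrings / submodules of S.\<close>

definition additive_subgroup :: "'a::comm_ring_1 set \<Rightarrow> bool" where
  "additive_subgroup I \<longleftrightarrow> 0 \<in> I \<and> (\<forall>x\<in>I. \<forall>y\<in>I. x + y \<in> I) \<and> (\<forall>x\<in>I. - x \<in> I)"

definition subring :: "'a::comm_ring_1 set \<Rightarrow> bool" where
  "subring R \<longleftrightarrow> additive_subgroup R \<and> 1 \<in> R \<and> (\<forall>x\<in>R. \<forall>y\<in>R. x * y \<in> R)"

definition set_mult :: "'a::comm_ring_1 set \<Rightarrow> 'a set \<Rightarrow> 'a set" where
  "set_mult I J = {\<Sum>i<n. x i * y i | (n::nat) x y. \<forall>i<n. x i \<in> I \<and> y i \<in> J}"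

definition colon :: "'a::comm_ring_1 set \<Rightarrow> 'a set \<Rightarrow> 'a set" where
  "colon I J = {x. \<forall>y\<in>J. x * y \<in> I}"

fun set_pow :: "'a::comm_ring_1 set \<Rightarrow> nat \<Rightarrow> 'a set" where
  "set_pow I 0 = colon I I"
| "set_pow I (Suc n) = set_mult (set_pow I n) I"

definition blowup :: "'a::comm_ring_1 set \<Rightarrow> 'a set" where
  "blowup I = (\<Union>k. colon (set_pow I k) (set_pow I k))"

definition submodule :: "'a::comm_ring_1 set \<Rightarrow> 'a set \<Rightarrow> bool" where
  "submodule R M \<longleftrightarrow> additive_subgroup M \<and> (\<forall>r\<in>R. \<forall>m\<in>M. r * m \<in> M)"

definition invertible_ideal :: "'a::comm_ring_1 set \<Rightarrow> 'a set \<Rightarrow> bool" where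
  "invertible_ideal R M \<longleftrightarrow> submodule R M \<and> (\<exists>J. submodule R J \<and> set_mult M J = R)"

text \<open>The ambient ring (the whole type) is a number field: a field of characteristic 0
that is finite-dimensional over Q. Since 'a is only a comm_ring_1, Q-linear combinations
are written with cleared denominators: every x has a nonzero integer multiple that is a
Z-linear combination of a fixed finite set B.\<close>
definition number_field_type :: "'a::comm_ring_1 itself \<Rightarrow> bool" where
  "number_field_type (_ :: 'a itself) \<longleftrightarrow>
     (0::'a) \<noteq> 1 \<and> (\<forall>x::'a. x \<noteq> 0 \<longrightarrow> (\<exists>y. x * y = 1)) \<and>
     (\<forall>n::nat. (of_nat n :: 'a) = 0 \<longrightarrow> n = 0) \<and>
     (\<exists>B::'a set. finite B \<and> (\<forall>x::'a. \<exists>(d::int) (c::'a \<Rightarrow> int).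
         d \<noteq> 0 \<and> of_int d * x = (\<Sum>b\<in>B. of_int (c b) * b)))"

definition fin_gen :: "'a::comm_ring_1 set \<Rightarrow> bool" where
  "fin_gen I \<longleftrightarrow> (\<exists>G. finite G \<and> I = {\<Sum>g\<in>G. of_int (c g) * g | c :: 'a \<Rightarrow> int. True})"

definition is_order :: "'a::comm_ring_1 set \<Rightarrow> bool" where
  "is_order O' \<longleftrightarrow> subring O' \<and> (0::'a) \<noteq> 1 \<and>
     (\<forall>x\<in>O'. \<forall>y\<in>O'. x * y = 0 \<longrightarrow> x = 0 \<or> y = 0) \<and>
     (\<exists>(n::nat) (b::nat \<Rightarrow> 'a).
        bij_betw (\<lambda>c. \<Sum>i<n. of_int (c i) * b i) {c :: nat \<Rightarrow> int. \<forall>i\<ge>n. c i = 0} O')"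

end

theory Submission
  imports Defs Complex_Main
begin

definition addcl :: "'a::comm_ring_1 set \<Rightarrow> bool" where
  "addcl C \<longleftrightarrow> 0 \<in> C \<and> (\<forall>x\<in>C. \<forall>y\<in>C. x + y \<in> C)"

inductive_set smg :: "'a::comm_ring_1 set \<Rightarrow> 'a set \<Rightarrow> 'a set" for A B where
  smg0: "0 \<in> smg A B"
| smgS: "s \<in> smg A B \<Longrightarrow> x \<in> A \<Longrightarrow> y \<in> B \<Longrightarrow> s + x * y \<in> smg A B"

lemma set_mult_smg: "set_mult A B = smg A B"
proof
  show "set_mult A B \<subseteq> smg A B"
  proof
    fix u assume "u \<in> set_mult A B"
    then have "\<exists>(n::nat) x y. u = (\<Sum>i<n. x i * y i) \<and> (\<forall>i<n. x i \<in> A \<and> y i \<in> B)"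
      unfolding set_mult_def by simp
    then obtain n :: nat and x y where u: "u = (\<Sum>i<n. x i * y i)" and xy: "\<forall>i<n. x i \<in> A \<and> y i \<in> B"
      by blast
    have "\<forall>m\<le>n. (\<Sum>i<m. x i * y i) \<in> smg A B"
    proof (intro allI impI)
      fix m assume "m \<le> n" then show "(\<Sum>i<m. x i * y i) \<in> smg A B"
      proof (induction m)
        case 0 then show ?case by (simp add: smg0)
      next
        case (Suc m) then show ?case using xy by (simp add: smgS)
      qed
    qed
    then show "u \<in> smg A B" using u by simp
  qed
  show "smg A B \<subseteq> set_mult A B"
  proof
    fix u assume "u \<in> smg A B"
    then show "u \<in> set_mult A B"
    proof (induction rule: smg.induct)
      case smg0
      show ?case unfolding set_mult_def by (rule CollectI, rule exI[of _ 0]) auto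
    next
      case (smgS s a b)
      then have "\<exists>(n::nat) x y. s = (\<Sum>i<n. x i * y i) \<and> (\<forall>i<n. x i \<in> A \<and> y i \<in> B)"
        unfolding set_mult_def by simp
      then obtain n :: nat and x y where u: "s = (\<Sum>i<n. x i * y i)" and xy: "\<forall>i<n. x i \<in> A \<and> y i \<in> B"
        by blast
      have "s + a * b = (\<Sum>i<Suc n. (x(n:=a)) i * (y(n:=b)) i)"
        using u by (simp add: lessThan_Suc)
      moreover have "\<forall>i<Suc n. (x(n:=a)) i \<in> A \<and> (y(n:=b)) i \<in> B"
        using xy smgS by (auto simp: less_Suc_eq)
      ultimately show ?case unfolding set_mult_def by blast
    qed
  qed
qed

lemma sm_prod: "x \<in> A \<Longrightarrow> y \<in> B \<Longrightarrow> x * y \<in> set_mult A B"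
  unfolding set_mult_smg using smgS[OF smg0, of x A y B] by simp

lemma sm_zero: "0 \<in> set_mult A B"
  unfolding set_mult_smg by (rule smg0)

lemma sm_add: assumes "u \<in> set_mult A B" "v \<in> set_mult A B" shows "u + v \<in> set_mult A B"
proof -
  have "v \<in> smg A B" using assms(2) set_mult_smg by blast
  then show ?thesis
  proof (induction rule: smg.induct)
    case smg0 then show ?case using assms(1) by simp
  next
    case (smgS s x y)
    then have "(u + s) + x * y \<in> smg A B" using set_mult_smg by (metis smg.smgS)
    then show ?case by (simp add: set_mult_smg add.assoc)
  qed
qed

lemma sm_addcl: "addcl (set_mult A B)"
  unfolding addcl_def using sm_zero sm_add by blast

lemma sm_least: assumes "addcl C" "\<And>a b. a \<in> A \<Longrightarrow> b \<in> B \<Longrightarrow> a * b \<in> C"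
  shows "set_mult A B \<subseteq> C"
proof
  fix u assume "u \<in> set_mult A B"
  then have "u \<in> smg A B" by (simp add: set_mult_smg)
  then show "u \<in> C"
    by (induction rule: smg.induct) (use assms in \<open>auto simp: addcl_def\<close>)
qed

lemma addcl_pre: assumes "addcl C" shows "addcl {u. u * c \<in> C}"
  using assms unfolding addcl_def by (auto simp: distrib_right)

lemma addcl_pre2: assumes "addcl C" shows "addcl {u. c * u \<in> C}"
  using assms unfolding addcl_def by (auto simp: distrib_left)

lemma sm_neg: assumes "\<forall>a\<in>A. - a \<in> A" "u \<in> set_mult A B" shows "- u \<in> set_mult A B"
proof -
  have "set_mult A B \<subseteq> {u. - u \<in> set_mult A B}"
  proof (rule sm_least)
    show "addcl {u. - u \<in> set_mult A B}" using sm_addcl[of A B] unfolding addcl_def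
      by (auto simp: add.commute)
    fix a b assume "a \<in> A" "b \<in> B"
    then show "a * b \<in> {u. - u \<in> set_mult A B}" using assms(1) sm_prod[of "-a" A b B] by simp
  qed
  then show ?thesis using assms(2) by blast
qed

lemma sm_subgroup: "additive_subgroup A \<Longrightarrow> additive_subgroup (set_mult A B)"
  unfolding additive_subgroup_def using sm_zero sm_add sm_neg by blast

lemma sm_mono: "A \<subseteq> A' \<Longrightarrow> B \<subseteq> B' \<Longrightarrow> set_mult A B \<subseteq> set_mult A' B'"
  by (rule sm_least[OF sm_addcl]) (auto intro: sm_prod)

lemma sm_comm: "set_mult A B = set_mult B A"
  by (intro equalityI; rule sm_least[OF sm_addcl]) (metis mult.commute sm_prod)+

lemma sm_assoc: "set_mult (set_mult A B) C = set_mult A (set_mult B C)"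
proof
  show "set_mult (set_mult A B) C \<subseteq> set_mult A (set_mult B C)"
  proof (rule sm_least[OF sm_addcl])
    fix u c assume u: "u \<in> set_mult A B" and c: "c \<in> C"
    have "set_mult A B \<subseteq> {u. u * c \<in> set_mult A (set_mult B C)}"
      by (rule sm_least[OF addcl_pre[OF sm_addcl]])
         (use c in \<open>auto simp: mult.assoc intro!: sm_prod\<close>)
    then show "u * c \<in> set_mult A (set_mult B C)" using u by blast
  qed
  show "set_mult A (set_mult B C) \<subseteq> set_mult (set_mult A B) C"
  proof (rule sm_least[OF sm_addcl])
    fix a u assume a: "a \<in> A" and u: "u \<in> set_mult B C"
    have "set_mult B C \<subseteq> {u. a * u \<in> set_mult (set_mult A B) C}"
      by (rule sm_least[OF addcl_pre2[OF sm_addcl]])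
         (use a in \<open>auto simp: mult.assoc[symmetric] intro!: sm_prod\<close>)
    then show "a * u \<in> set_mult (set_mult A B) C" using u by blast
  qed
qed

lemma sm_lcomm: "set_mult A (set_mult B C) = set_mult B (set_mult A C)"
  by (metis sm_assoc sm_comm)

lemmas sm_ac = sm_assoc sm_comm sm_lcomm

lemma sm_scal: assumes "\<forall>a\<in>A. x * a \<in> A" "u \<in> set_mult A B" shows "x * u \<in> set_mult A B"
proof -
  have "set_mult A B \<subseteq> {u. x * u \<in> set_mult A B}"
    by (rule sm_least[OF addcl_pre2[OF sm_addcl]])
       (use assms(1) in \<open>auto simp: mult.assoc[symmetric] intro!: sm_prod\<close>)
  then show ?thesis using assms(2) by blast
qed

lemma subring_sm_self: assumes R: "subring R" shows "set_mult R R = R"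
proof
  show "set_mult R R \<subseteq> R"
    by (rule sm_least) (use R in \<open>auto simp: subring_def additive_subgroup_def addcl_def\<close>)
  show "R \<subseteq> set_mult R R"
  proof
    fix r assume "r \<in> R"
    moreover have "1 \<in> R" using R by (simp add: subring_def)
    ultimately have "r * 1 \<in> set_mult R R" by (rule sm_prod)
    then show "r \<in> set_mult R R" by simp
  qed
qed

lemma sm_colon_self: assumes I: "additive_subgroup I" shows "set_mult (colon I I) I = I"
proof
  show "set_mult (colon I I) I \<subseteq> I"
    by (rule sm_least) (use I in \<open>auto simp: colon_def additive_subgroup_def addcl_def\<close>)
  show "I \<subseteq> set_mult (colon I I) I"
  proof
    fix r assume "r \<in> I"
    moreover have "1 \<in> colon I I" by (simp add: colon_def)
    ultimately have "1 * r \<in> set_mult (colon I I) I" by (intro sm_prod)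
    then show "r \<in> set_mult (colon I I) I" by simp
  qed
qed

lemma colon_subring: assumes "additive_subgroup J" shows "subring (colon J J)"
  using assms unfolding subring_def additive_subgroup_def colon_def
  by (auto simp: distrib_right mult.assoc)

lemma set_pow_subgroup: "additive_subgroup I \<Longrightarrow> additive_subgroup (set_pow I k)"
proof (induction k)
  case 0 then show ?case using colon_subring[of I] by (simp add: subring_def)
next
  case (Suc k) then show ?case by (simp add: sm_subgroup)
qed

lemma set_pow_1: "additive_subgroup I \<Longrightarrow> set_pow I (Suc 0) = I"
  by (simp add: sm_colon_self)

abbreviation Ok :: "'a::comm_ring_1 set \<Rightarrow> nat \<Rightarrow> 'a set" where
  "Ok I k \<equiv> colon (set_pow I k) (set_pow I k)"

lemma O_Suc: "Ok I k \<subseteq> Ok I (Suc k)"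
  unfolding colon_def by (auto intro: sm_scal)

lemma O_mono: "k \<le> k' \<Longrightarrow> Ok I k \<subseteq> Ok I k'"
proof (induction k' rule: dec_induct)
  case base show ?case by simp
next
  case (step n) then show ?case using O_Suc[of I n] by blast
qed

lemma blowup_subring:
  assumes "additive_subgroup I" shows "subring (blowup I)"
proof -
  have sr: "\<And>k. subring (Ok I k)" using colon_subring set_pow_subgroup assms by blast
  have ex: "\<And>x y. x \<in> blowup I \<Longrightarrow> y \<in> blowup I \<Longrightarrow> \<exists>k. x \<in> Ok I k \<and> y \<in> Ok I k"
  proof -
    fix x y assume "x \<in> blowup I" "y \<in> blowup I"
    then obtain k1 k2 where "x \<in> Ok I k1" "y \<in> Ok I k2" unfolding blowup_def by blast
    then show "\<exists>k. x \<in> Ok I k \<and> y \<in> Ok I k"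
      using O_mono[of k1 "max k1 k2" I] O_mono[of k2 "max k1 k2" I] by auto
  qed
  have inb: "\<And>x k. x \<in> Ok I k \<Longrightarrow> x \<in> blowup I" unfolding blowup_def by blast
  show ?thesis unfolding subring_def additive_subgroup_def
  proof (intro conjI ballI)
    have "0 \<in> Ok I 0" "1 \<in> Ok I 0" using sr[of 0] unfolding subring_def additive_subgroup_def by blast+
    then show "0 \<in> blowup I" "1 \<in> blowup I" using inb by blast+
    fix x assume x: "x \<in> blowup I"
    then obtain k where "x \<in> Ok I k" unfolding blowup_def by blast
    then have "- x \<in> Ok I k" using sr[of k] unfolding subring_def additive_subgroup_def by blast
    then show "- x \<in> blowup I" using inb by blast
    { fix y assume "y \<in> blowup I"
      then obtain k where "x \<in> Ok I k" "y \<in> Ok I k" using ex x by blast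
      then have "x + y \<in> Ok I k" "x * y \<in> Ok I k"
        using sr[of k] unfolding subring_def additive_subgroup_def by blast+
      then show "x + y \<in> blowup I" "x * y \<in> blowup I" using inb by blast+ }
  qed
qed

lemma blowup_le:
  assumes I: "additive_subgroup I" and R: "subring R" and inv: "invertible_ideal R (set_mult R I)"
  shows "blowup I \<subseteq> R"
proof -
  obtain J where J: "set_mult (set_mult R I) J = R" using inv unfolding invertible_ideal_def by blast
  have RR: "set_mult R R = R" using subring_sm_self[OF R] .
  have RR2: "\<And>X. set_mult R (set_mult R X) = set_mult R X" using RR sm_assoc by metis
  have key: "\<exists>Jk. set_mult (set_mult R (set_pow I (Suc m))) Jk = R" for m
  proof (induction m)
    case 0 then show ?case using J set_pow_1[OF I] by auto
  next
    case (Suc m)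
    then obtain Jk where Jk: "set_mult (set_mult R (set_pow I (Suc m))) Jk = R" by blast
    have "set_mult (set_mult R (set_pow I (Suc (Suc m)))) (set_mult Jk J)
        = set_mult (set_mult (set_mult R (set_pow I (Suc m))) Jk) (set_mult (set_mult R I) J)"
      by (simp add: sm_ac RR2)
    also have "\<dots> = R" using Jk J RR by simp
    finally show ?case by blast
  qed
  show ?thesis
  proof
    fix x assume "x \<in> blowup I"
    then obtain k where "x \<in> Ok I k" unfolding blowup_def by blast
    then have x: "x \<in> Ok I (Suc k)" using O_Suc by blast
    obtain Jk where Jk: "set_mult (set_mult R (set_pow I (Suc k))) Jk = R" using key by blast
    have 1: "1 \<in> R" using R by (simp add: subring_def)
    have xP: "\<forall>a\<in>set_pow I (Suc k). x * a \<in> set_pow I (Suc k)" using x by (simp add: colon_def)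
    have a: "\<forall>a\<in>set_mult R (set_pow I (Suc k)). x * a \<in> set_mult R (set_pow I (Suc k))"
      using sm_scal[OF xP, of _ R] by (metis sm_comm)
    have "x * 1 \<in> set_mult (set_mult R (set_pow I (Suc k))) Jk"
      by (rule sm_scal[OF a]) (use 1 Jk in simp)
    then show "x \<in> R" using Jk by simp
  qed
qed

lemma blowup_eq:
  assumes I: "additive_subgroup I"
    and inv: "invertible_ideal (Ok I n) (set_mult (Ok I n) I)"
  shows "Ok I n = blowup I"
proof
  show "blowup I \<subseteq> Ok I n"
    by (rule blowup_le[OF I colon_subring[OF set_pow_subgroup[OF I]] inv])
  show "Ok I n \<subseteq> blowup I" unfolding blowup_def by blast
qed

locale nf =
  fixes Bs :: "'a::comm_ring_1 set"
  assumes zero_ne_one_nf: "(0::'a) \<noteq> 1"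
  and inv_ex: "\<And>x::'a. x \<noteq> 0 \<Longrightarrow> \<exists>y. x * y = 1"
  and char0: "\<And>n::nat. (of_nat n :: 'a) = 0 \<Longrightarrow> n = 0"
  and finB: "finite Bs"
  and spanB: "\<And>x. \<exists>(d::int) c. d \<noteq> 0 \<and> of_int d * x = (\<Sum>b\<in>Bs. of_int (c b) * b)"
begin

definition inv :: "'a \<Rightarrow> 'a" where "inv x = (SOME y. x * y = 1)"

lemma inv_r: "x \<noteq> 0 \<Longrightarrow> x * inv x = 1"
  unfolding inv_def by (rule someI_ex) (rule inv_ex)

lemma inv_l: "x \<noteq> 0 \<Longrightarrow> inv x * x = 1"
  using inv_r by (simp add: mult.commute)

lemma no_zd: "(x::'a) * y = 0 \<Longrightarrow> x = 0 \<or> y = 0"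
proof (rule ccontr)
  assume "x * y = 0" "\<not> (x = 0 \<or> y = 0)"
  then have "y = inv x * x * y" using inv_l by simp
  also have "\<dots> = 0" using \<open>x * y = 0\<close> by (simp add: mult.assoc)
  finally show False using \<open>\<not> (x = 0 \<or> y = 0)\<close> by simp
qed

lemma mult_eq_0_iff_nf: "(x::'a) * y = 0 \<longleftrightarrow> x = 0 \<or> y = 0"
  using no_zd by auto

lemma mult_cancel_nf: "(c::'a) \<noteq> 0 \<Longrightarrow> c * x = c * y \<Longrightarrow> x = y"
  using no_zd[of c "x - y"] by (simp add: right_diff_distrib)

lemma of_int_eq0: "(of_int n :: 'a) = 0 \<Longrightarrow> n = 0"
proof -
  assume a: "(of_int n :: 'a) = 0"
  have "(of_nat (nat \<bar>n\<bar>) :: 'a) = 0"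
  proof (cases "n \<ge> 0")
    case True then show ?thesis using a by (metis nat_0_le of_int_of_nat_eq abs_of_nonneg)
  next
    case False
    then have "(of_int n :: 'a) = - of_nat (nat \<bar>n\<bar>)"
      by (metis abs_of_neg not_le of_int_minus of_int_of_nat_eq minus_minus nat_0_le abs_ge_zero)
    then show ?thesis using a by simp
  qed
  then show "n = 0" using char0 by fastforce
qed

lemma of_int_ne0: "n \<noteq> 0 \<Longrightarrow> (of_int n :: 'a) \<noteq> 0"
  using of_int_eq0 by blast

lemma of_int_inj_nf: "(of_int m :: 'a) = of_int n \<Longrightarrow> m = n"
  using of_int_eq0[of "m - n"] by simp

definition qr :: "rat \<Rightarrow> 'a" where
  "qr q = of_int (fst (quotient_of q)) * inv (of_int (snd (quotient_of q)))"

lemma qr_char: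
  assumes n: "n \<noteq> 0" and y: "of_int n * y = (of_int m :: 'a)"
  shows "qr (of_int m / of_int n) = y"
proof -
  obtain a b where ab: "quotient_of (of_int m / of_int n) = (a, b)" by (cases "quotient_of (of_int m / of_int n)")
  have b: "b > 0" using quotient_of_denom_pos[OF ab] .
  have "rat_of_int m / of_int n = of_int a / of_int b" using quotient_of_div[OF ab] .
  then have "rat_of_int (m * b) = of_int (a * n)" using n b by (simp add: field_simps)
  then have mb: "m * b = a * n" by (simp only: of_int_eq_iff)
  have "of_int n * (of_int b * y) = (of_int n * (of_int a :: 'a))"
    using y mb by (metis mult.left_commute of_int_mult mult.commute)
  then have by_: "of_int b * y = (of_int a :: 'a)" using mult_cancel_nf of_int_ne0[OF n] by blast
  have "qr (of_int m / of_int n) = of_int a * inv (of_int b)" unfolding qr_def ab by simp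
  also have "\<dots> = (of_int b * y) * inv (of_int b)" by (simp add: by_)
  also have "\<dots> = y * (of_int b * inv (of_int b))" by (simp add: ac_simps)
  also have "\<dots> = y" using inv_r[OF of_int_ne0] b by simp
  finally show ?thesis .
qed

lemma qr_den: "of_int (snd (quotient_of q)) * qr q = of_int (fst (quotient_of q))"
proof -
  have "snd (quotient_of q) \<noteq> 0" using quotient_of_denom_pos' by (metis less_irrefl)
  then show ?thesis unfolding qr_def
    using inv_r[OF of_int_ne0] by (simp add: mult.left_commute)
qed

lemma rat_repr: "q = of_int (fst (quotient_of q)) / of_int (snd (quotient_of q))"
  by (metis prod.collapse quotient_of_div)

lemma den_ne0: "snd (quotient_of q) \<noteq> 0"
  using quotient_of_denom_pos' by (metis less_irrefl)

lemma qr_add: "qr (p + q) = qr p + qr q"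
proof -
  define a b c d where "a = fst (quotient_of p)" "b = snd (quotient_of p)"
    "c = fst (quotient_of q)" "d = snd (quotient_of q)"
  have b: "b \<noteq> 0" and d: "d \<noteq> 0" using den_ne0 a_b_c_d_def by auto
  have p: "p = of_int a / of_int b" and q: "q = of_int c / of_int d"
    using rat_repr[of p] rat_repr[of q] unfolding a_b_c_d_def by auto
  have pq: "p + q = of_int (a * d + c * b) / of_int (b * d)"
    unfolding p q using b d by (simp add: field_simps)
  have "of_int (b * d) * (qr p + qr q) = of_int d * (of_int b * qr p) + of_int b * (of_int d * qr q)"
    by (simp add: algebra_simps)
  also have "\<dots> = (of_int (a * d + c * b) :: 'a)"
    using qr_den[of p] qr_den[of q] unfolding a_b_c_d_def by (simp add: algebra_simps)
  finally have e: "of_int (b * d) * (qr p + qr q) = (of_int (a * d + c * b) :: 'a)" .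
  show ?thesis unfolding pq by (rule qr_char[OF _ e]) (use b d in simp)
qed

lemma qr_mult: "qr (p * q) = qr p * qr q"
proof -
  define a b c d where "a = fst (quotient_of p)" "b = snd (quotient_of p)"
    "c = fst (quotient_of q)" "d = snd (quotient_of q)"
  have b: "b \<noteq> 0" and d: "d \<noteq> 0" using den_ne0 a_b_c_d_def by auto
  have p: "p = of_int a / of_int b" and q: "q = of_int c / of_int d"
    using rat_repr[of p] rat_repr[of q] unfolding a_b_c_d_def by auto
  have pq: "p * q = of_int (a * c) / of_int (b * d)"
    unfolding p q using b d by (simp add: field_simps)
  have "of_int (b * d) * (qr p * qr q) = (of_int b * qr p) * (of_int d * qr q)"
    by (simp add: algebra_simps)
  also have "\<dots> = (of_int (a * c) :: 'a)"
    using qr_den[of p] qr_den[of q] unfolding a_b_c_d_def by simp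
  finally have e: "of_int (b * d) * (qr p * qr q) = (of_int (a * c) :: 'a)" .
  show ?thesis unfolding pq by (rule qr_char[OF _ e]) (use b d in simp)
qed

lemma qr_of_int: "qr (of_int n) = of_int n"
  using qr_char[of 1 "of_int n" n] by simp

lemma qr_1: "qr 1 = 1" using qr_of_int[of 1] by simp
lemma qr_0: "qr 0 = 0" using qr_of_int[of 0] by simp

lemma qr_inj: "qr p = qr q \<Longrightarrow> p = q"
proof -
  assume e: "qr p = qr q"
  define a b c d where "a = fst (quotient_of p)" "b = snd (quotient_of p)"
    "c = fst (quotient_of q)" "d = snd (quotient_of q)"
  have b: "b \<noteq> 0" and d: "d \<noteq> 0" using den_ne0 a_b_c_d_def by auto
  have "(of_int (a * d) :: 'a) = of_int d * (of_int b * qr p)"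
    using qr_den[of p] unfolding a_b_c_d_def by (simp add: algebra_simps)
  also have "\<dots> = of_int b * (of_int d * qr q)" using e by (simp add: algebra_simps)
  also have "\<dots> = of_int (c * b)" using qr_den[of q] unfolding a_b_c_d_def by (simp add: algebra_simps)
  finally have "a * d = c * b" by (rule of_int_inj_nf)
  then show "p = q" using rat_repr[of p] rat_repr[of q] b d unfolding a_b_c_d_def
    by (metis (no_types, opaque_lifting) frac_eq_eq of_int_eq_0_iff of_int_mult)
qed

definition scl :: "rat \<Rightarrow> 'a \<Rightarrow> 'a" where "scl q x = qr q * x"

sublocale vs: vector_space scl
  by unfold_locales (auto simp: scl_def qr_add qr_mult qr_1 algebra_simps)

end

definition zsp :: "nat \<Rightarrow> (nat \<Rightarrow> 'a::comm_ring_1) \<Rightarrow> 'a set" where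
  "zsp n b = {\<Sum>i<n. of_int (c i) * b i | c. True}"

definition zind :: "nat \<Rightarrow> (nat \<Rightarrow> 'a::comm_ring_1) \<Rightarrow> bool" where
  "zind n b \<longleftrightarrow> (\<forall>c. (\<Sum>i<n. of_int (c i) * b i) = 0 \<longrightarrow> (\<forall>i<n. c i = 0))"

lemma zspI: "x = (\<Sum>i<n. of_int (c i) * b i) \<Longrightarrow> x \<in> zsp n b"
  unfolding zsp_def by blast

lemma zsp_0: "zsp 0 b = {0}" by (simp add: zsp_def)

lemma zsp_Suc: "x \<in> zsp (Suc n) b \<longleftrightarrow> (\<exists>s k. s \<in> zsp n b \<and> x = s + of_int k * b n)"
proof
  assume "x \<in> zsp (Suc n) b"
  then obtain c where "x = (\<Sum>i<Suc n. of_int (c i) * b i)" by (auto simp: zsp_def)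
  then show "\<exists>s k. s \<in> zsp n b \<and> x = s + of_int k * b n" by (auto simp: zsp_def)
next
  assume "\<exists>s k. s \<in> zsp n b \<and> x = s + of_int k * b n"
  then obtain c k where x: "x = (\<Sum>i<n. of_int (c i) * b i) + of_int k * b n" by (auto simp: zsp_def)
  have "x = (\<Sum>i<Suc n. of_int ((c(n:=k)) i) * b i)" unfolding x by simp
  then show "x \<in> zsp (Suc n) b" by (rule zspI)
qed

lemma zsp_cong: "(\<And>i. i < n \<Longrightarrow> b i = b' i) \<Longrightarrow> zsp n b = zsp n b'"
  unfolding zsp_def by (metis (no_types, lifting) lessThan_iff sum.cong)

lemma subgroup_int_mult:
  assumes H: "additive_subgroup H" and h: "h \<in> H" shows "of_int k * h \<in> H"
proof -
  have nat: "of_nat m * h \<in> H" for m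
    by (induction m) (use H h in \<open>auto simp: additive_subgroup_def distrib_right\<close>)
  show ?thesis
  proof (cases "k \<ge> 0")
    case True then show ?thesis using nat[of "nat k"] by simp
  next
    case False
    then have "of_int k * h = - (of_nat (nat (-k)) * h)" by simp
    then show ?thesis using nat[of "nat (-k)"] H unfolding additive_subgroup_def by simp
  qed
qed

lemma subgroup_sum:
  assumes H: "additive_subgroup H" shows "(\<And>i. i \<in> S \<Longrightarrow> f i \<in> H) \<Longrightarrow> sum f S \<in> H"
  by (induction S rule: infinite_finite_induct) (use H in \<open>auto simp: additive_subgroup_def\<close>)

lemma zsp_subgroup: "additive_subgroup (zsp n b)"
  unfolding additive_subgroup_def
proof (intro conjI ballI)
  show "0 \<in> zsp n b" unfolding zsp_def by (rule CollectI, rule exI[of _ "\<lambda>_. 0"]) simp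
  fix x assume "x \<in> zsp n b"
  then obtain c where x: "x = (\<Sum>i<n. of_int (c i) * b i)" by (auto simp: zsp_def)
  have "- x = (\<Sum>i<n. of_int (- c i) * b i)" unfolding x by (simp add: sum_negf)
  then show "- x \<in> zsp n b" by (rule zspI)
  fix y assume "y \<in> zsp n b"
  then obtain d where y: "y = (\<Sum>i<n. of_int (d i) * b i)" by (auto simp: zsp_def)
  have "x + y = (\<Sum>i<n. of_int (c i + d i) * b i)" unfolding x y by (simp add: sum.distrib distrib_right)
  then show "x + y \<in> zsp n b" by (rule zspI)
qed

lemma zsp_gen: "i < n \<Longrightarrow> b i \<in> zsp n b"
proof -
  assume i: "i < n"
  have "(\<Sum>j<n. of_int (if j = i then 1 else 0) * b j) = (\<Sum>j<n. if j = i then b j else 0)"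
    by (rule sum.cong) auto
  also have "\<dots> = b i" using i by simp
  finally show ?thesis using zspI by metis
qed

lemma zsp_least: assumes H: "additive_subgroup H" and b: "\<And>i. i < n \<Longrightarrow> b i \<in> H"
  shows "zsp n b \<subseteq> H"
proof
  fix x assume "x \<in> zsp n b"
  then obtain c where x: "x = (\<Sum>i<n. of_int (c i) * b i)" by (auto simp: zsp_def)
  show "x \<in> H" unfolding x by (rule subgroup_sum[OF H]) (use subgroup_int_mult[OF H] b in auto)
qed

lemma zsp_int_mult: "x \<in> zsp n b \<Longrightarrow> of_int k * x \<in> zsp n b"
  using subgroup_int_mult[OF zsp_subgroup] .

lemma zsp_add: "x \<in> zsp n b \<Longrightarrow> y \<in> zsp n b \<Longrightarrow> x + y \<in> zsp n b"
  using zsp_subgroup unfolding additive_subgroup_def by blast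

lemma zsp_neg: "x \<in> zsp n b \<Longrightarrow> - x \<in> zsp n b"
  using zsp_subgroup unfolding additive_subgroup_def by blast

lemma zsp_diff: "x \<in> zsp n b \<Longrightarrow> y \<in> zsp n b \<Longrightarrow> x - y \<in> zsp n b"
  using zsp_add[OF _ zsp_neg] by (metis diff_conv_add_uminus)

lemma zsp_zero: "0 \<in> zsp n b"
  using zsp_subgroup unfolding additive_subgroup_def by blast

context nf begin

lemma free_sub:
  "additive_subgroup (H::'a set) \<Longrightarrow> H \<subseteq> zsp m g \<Longrightarrow> \<exists>n b. zind n b \<and> H = zsp n b"
proof (induction m arbitrary: g H)
  case 0
  then have "H = {0}" using zsp_0 by (auto simp: additive_subgroup_def)
  then show ?case by (intro exI[of _ 0]) (auto simp: zind_def zsp_0)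
next
  case (Suc m)
  note H = Suc.prems(1) and Hsub = Suc.prems(2)
  show ?case
  proof (cases "\<exists>N. N \<noteq> 0 \<and> of_int N * g m \<in> zsp m g")
    case True
    then obtain N where N: "N \<noteq> 0" and Ng: "of_int N * g m \<in> zsp m g" by blast
    have N0: "(of_int N :: 'a) \<noteq> 0" using of_int_ne0[OF N] .
    define g' where "g' i = g i * inv (of_int N)" for i
    have gg': "g i = of_int N * g' i" for i
      unfolding g'_def using inv_r[OF N0] by (metis mult.left_commute mult_1_right)
    have "zsp (Suc m) g \<subseteq> zsp m g'"
    proof (rule zsp_least[OF zsp_subgroup])
      fix i assume "i < Suc m"
      show "g i \<in> zsp m g'"
      proof (cases "i < m")
        case True then show ?thesis using zsp_int_mult[OF zsp_gen[OF True]] gg' by metis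
      next
        case False
        then have i: "i = m" using \<open>i < Suc m\<close> by simp
        obtain c where c: "of_int N * g m = (\<Sum>j<m. of_int (c j) * g j)" using Ng by (auto simp: zsp_def)
        have "g m = inv (of_int N) * (of_int N * g m)" using inv_l[OF N0] by (simp add: mult.assoc[symmetric])
        also have "\<dots> = (\<Sum>j<m. of_int (c j) * g' j)" unfolding c g'_def
          by (simp add: sum_distrib_left ac_simps)
        finally show ?thesis unfolding i by (rule zspI)
      qed
    qed
    then show ?thesis using Suc.IH[OF H] Hsub by blast
  next
    case False
    then have uniq: "\<And>s k. s \<in> zsp m g \<Longrightarrow> s + of_int k * g m \<in> zsp m g \<Longrightarrow> k = 0"
      by (metis add_diff_cancel_left' zsp_diff)
    define H' where "H' = H \<inter> zsp m g"
    have H'sg: "additive_subgroup H'" using H zsp_subgroup unfolding H'_def additive_subgroup_def by blast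
    obtain n' b' where zb': "zind n' b'" and H'eq: "H' = zsp n' b'"
      using Suc.IH[OF H'sg] unfolding H'_def by blast
    define C where "C = {k. \<exists>s\<in>zsp m g. s + of_int k * g m \<in> H}"
    have decomp: "\<And>h. h \<in> H \<Longrightarrow> \<exists>s k. s \<in> zsp m g \<and> h = s + of_int k * g m \<and> k \<in> C"
    proof -
      fix h assume h: "h \<in> H"
      then obtain s k where "s \<in> zsp m g" "h = s + of_int k * g m" using Hsub zsp_Suc by blast
      then show "\<exists>s k. s \<in> zsp m g \<and> h = s + of_int k * g m \<and> k \<in> C" using h unfolding C_def by blast
    qed
    show ?thesis
    proof (cases "C \<subseteq> {0}")
      case True
      have "H = H'"
      proof
        show "H \<subseteq> H'" using decomp True unfolding H'_def by fastforce
      qed (auto simp: H'_def)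
      then show ?thesis using zb' H'eq by blast
    next
      case False
      then obtain k0 where k0: "k0 \<in> C" "k0 \<noteq> 0" by blast
      have Cneg: "k \<in> C \<Longrightarrow> - k \<in> C" for k
      proof -
        assume "k \<in> C"
        then obtain s where s: "s \<in> zsp m g" "s + of_int k * g m \<in> H" unfolding C_def by blast
        then have "- (s + of_int k * g m) \<in> H" using H unfolding additive_subgroup_def by blast
        moreover have "(- s) + of_int (- k) * g m = - (s + of_int k * g m)" by (simp add: algebra_simps)
        ultimately have "(- s) + of_int (- k) * g m \<in> H" by simp
        then show "- k \<in> C" using zsp_neg[OF s(1)] unfolding C_def by blast
      qed
      have "\<exists>k. k \<in> C \<and> k > 0"
        using k0 Cneg by (cases "k0 > 0") (auto intro: exI[of _ "- k0"])
      define dn where "dn = (LEAST n::nat. int n \<in> C \<and> 0 < n)"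
      define d where "d = int dn"
      have exn: "\<exists>n::nat. int n \<in> C \<and> 0 < n"
      proof -
        obtain k where "k \<in> C" "k > 0" using \<open>\<exists>k. k \<in> C \<and> k > 0\<close> by blast
        then show ?thesis by (intro exI[of _ "nat k"]) simp
      qed
      have dC: "d \<in> C \<and> 0 < d" unfolding d_def dn_def
        using LeastI_ex[OF exn] by simp
      have dmin: "\<And>k. k \<in> C \<Longrightarrow> 0 < k \<Longrightarrow> d \<le> k"
      proof -
        fix k :: int assume k: "k \<in> C" "0 < k"
        then have "dn \<le> nat k" unfolding dn_def by (intro Least_le) simp
        then show "d \<le> k" unfolding d_def using k by simp
      qed
      obtain s0 where s0: "s0 \<in> zsp m g" and h0H: "s0 + of_int d * g m \<in> H" using dC unfolding C_def by blast
      define h0 where "h0 = s0 + of_int d * g m"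
      have dvdC: "\<And>k. k \<in> C \<Longrightarrow> d dvd k"
      proof -
        fix k assume "k \<in> C"
        then obtain s where s: "s \<in> zsp m g" "s + of_int k * g m \<in> H" unfolding C_def by blast
        have "(s + of_int k * g m) - of_int (k div d) * h0 \<in> H"
          using H s(2) subgroup_int_mult[OF H h0H[folded h0_def], of "k div d"]
          unfolding additive_subgroup_def by (metis diff_conv_add_uminus)
        moreover have "(s + of_int k * g m) - of_int (k div d) * h0
            = (s - of_int (k div d) * s0) + of_int (k mod d) * g m"
        proof -
          have "k = (k div d) * d + k mod d" by simp
          then have "(of_int k :: 'a) = of_int (k div d) * of_int d + of_int (k mod d)"
            by (metis of_int_add of_int_mult)
          then show ?thesis unfolding h0_def by (simp add: algebra_simps)
        qed
        ultimately have "k mod d \<in> C" unfolding C_def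
          using zsp_diff[OF s(1) zsp_int_mult[OF s0]] by auto
        moreover have "0 \<le> k mod d" "k mod d < d" using dC by auto
        ultimately have "k mod d = 0" using dmin by (meson not_le order_le_less)
        then show "d dvd k" by auto
      qed
      define b where "b = b'(n' := h0)"
      have bb': "\<And>i. i < n' \<Longrightarrow> b i = b' i" unfolding b_def by simp
      have zspb: "zsp n' b = zsp n' b'" using zsp_cong bb' by blast
      have Heq: "H = zsp (Suc n') b"
      proof
        show "zsp (Suc n') b \<subseteq> H"
        proof (rule zsp_least[OF H])
          fix i assume "i < Suc n'"
          then show "b i \<in> H"
            using zsp_gen[of i n' b'] H'eq h0H unfolding b_def H'_def h0_def
            by (cases "i = n'") auto
        qed
        show "H \<subseteq> zsp (Suc n') b"
        proof
          fix h assume h: "h \<in> H"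
          then obtain s k where s: "s \<in> zsp m g" "h = s + of_int k * g m" "k \<in> C" using decomp by blast
          obtain q where q: "k = q * d" using dvdC[OF s(3)] by (metis dvdE mult.commute)
          have "h - of_int q * h0 = s - of_int q * s0"
            unfolding s(2) h0_def q by (simp add: algebra_simps)
          moreover have "h - of_int q * h0 \<in> H"
            using H h subgroup_int_mult[OF H h0H[folded h0_def], of q]
            unfolding additive_subgroup_def by (metis diff_conv_add_uminus)
          ultimately have "h - of_int q * h0 \<in> H'"
            unfolding H'_def using zsp_diff[OF s(1) zsp_int_mult[OF s0]] by auto
          then have "h - of_int q * h0 \<in> zsp n' b" using H'eq zspb by simp
          moreover have "h = (h - of_int q * h0) + of_int q * b n'" unfolding b_def by simp
          ultimately show "h \<in> zsp (Suc n') b" unfolding zsp_Suc by blast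
        qed
      qed
      have "zind (Suc n') b"
        unfolding zind_def
      proof (intro allI impI)
        fix e i assume e: "(\<Sum>i<Suc n'. of_int (e i) * b i) = 0" and i: "i < Suc n'"
        define u where "u = (\<Sum>i<n'. of_int (e i) * b' i)"
        have u0: "u + of_int (e n') * h0 = 0" using e unfolding u_def
          by (simp add: b_def)
        have uH: "u \<in> zsp m g" using H'eq unfolding H'_def u_def zsp_def by blast
        have "(u + of_int (e n') * s0) + of_int (e n' * d) * g m = 0"
          using u0 unfolding h0_def by (simp add: algebra_simps)
        then have "e n' * d = 0"
          using uniq[OF zsp_add[OF uH zsp_int_mult[OF s0]]] zsp_zero by metis
        then have en: "e n' = 0" using dC by simp
        then have "u = 0" using u0 by simp
        then have "\<forall>j<n'. e j = 0" using zb' unfolding zind_def u_def by blast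
        then show "e i = 0" using en i less_Suc_eq by auto
      qed
      then show ?thesis using Heq by blast
    qed
  qed
qed

end

context nf begin

lemma scl_of_int: "scl (of_int n) x = of_int n * x"
  by (simp add: scl_def qr_of_int)

lemma scl_mult_left: "scl q x * y = scl q (x * y)"
  by (simp add: scl_def mult.assoc)

lemma scl_mult_right: "x * scl q y = scl q (x * y)"
  by (simp add: scl_def mult.left_commute)

lemma span_Bs: "x \<in> vs.span Bs"
proof -
  obtain d c where d: "d \<noteq> 0" and e: "of_int d * x = (\<Sum>b\<in>Bs. of_int (c b) * b)" using spanB by blast
  have "of_int d * x \<in> vs.span Bs" unfolding e
    by (rule vs.span_sum) (metis scl_of_int vs.span_base vs.span_scale)
  then have "scl (1 / of_int d) (of_int d * x) \<in> vs.span Bs" by (rule vs.span_scale)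
  moreover have "scl (1 / of_int d) (of_int d * x) = x"
    using d by (simp add: scl_def qr_mult[symmetric] qr_of_int[symmetric] mult.assoc[symmetric] qr_1)
  ultimately show ?thesis by simp
qed

definition Bas :: "'a set" where
  "Bas = (SOME B'. B' \<subseteq> Bs \<and> vs.independent B' \<and> Bs \<subseteq> vs.span B')"

lemma Bas_props: "Bas \<subseteq> Bs \<and> vs.independent Bas \<and> Bs \<subseteq> vs.span Bas"
proof -
  obtain B' where "B' \<subseteq> Bs" "vs.independent B'" "Bs \<subseteq> vs.span B'"
    using vs.maximal_independent_subset[of Bs] by blast
  then show ?thesis unfolding Bas_def by (rule someI[where P = "\<lambda>B'. B' \<subseteq> Bs \<and> vs.independent B' \<and> Bs \<subseteq> vs.span B'", OF conjI[OF _ conjI]])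
qed

lemma span_Bas: "vs.span Bas = UNIV"
proof -
  have "Bs \<subseteq> vs.span Bas" using Bas_props by blast
  then have "vs.span Bs \<subseteq> vs.span Bas" by (metis vs.span_mono vs.span_span)
  then show ?thesis using span_Bs by blast
qed

sublocale fd: finite_dimensional_vector_space scl Bas
  by unfold_locales (use Bas_props finB finite_subset span_Bas in auto)


lemma zind_inj: assumes "zind n b" shows "inj_on b {..<n}"
proof (rule inj_onI)
  fix i j assume i: "i \<in> {..<n}" and j: "j \<in> {..<n}" and e: "b i = b j"
  show "i = j"
  proof (rule ccontr)
    assume ne: "i \<noteq> j"
    define c where "c k = (if k = i then 1 else if k = j then -1 else 0::int)" for k
    have "(\<Sum>k<n. of_int (c k) * b k) = (\<Sum>k<n. (if k = i then b k else 0) - (if k = j then b k else 0))"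
      by (rule sum.cong) (auto simp: c_def ne)
    also have "\<dots> = 0" using i j e by (simp add: sum_subtractf)
    finally have "c i = 0" using assms i unfolding zind_def by blast
    then show False by (simp add: c_def)
  qed
qed

lemma clear_denoms: "finite S \<Longrightarrow> \<exists>D::int. D > 0 \<and> (\<forall>q\<in>S. \<exists>z. of_int D * q = (of_int z :: rat))"
proof (induction S rule: finite_induct)
  case empty then show ?case by (intro exI[of _ 1]) simp
next
  case (insert q S)
  then obtain D where D: "D > 0" "\<forall>q\<in>S. \<exists>z. of_int D * q = (of_int z :: rat)" by blast
  define e where "e = snd (quotient_of q)"
  define a where "a = fst (quotient_of q)"
  have e: "e > 0" unfolding e_def by (rule quotient_of_denom_pos')
  have qq: "q = of_int a / of_int e" using rat_repr[of q] unfolding e_def a_def .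
  have qe: "of_int e * q = of_int (fst (quotient_of q))"
    unfolding a_def[symmetric] using e by (simp add: qq)
  show ?case
  proof (rule exI[of _ "D * e"], intro conjI ballI)
    show "D * e > 0" using D e by simp
    fix r assume "r \<in> insert q S"
    then show "\<exists>z. of_int (D * e) * r = (of_int z :: rat)"
    proof (cases "r = q")
      case True then show ?thesis using qe by (intro exI[of _ "D * fst (quotient_of q)"]) (simp add: ac_simps)
    next
      case False
      then have "r \<in> S" using \<open>r \<in> insert q S\<close> by simp
      then obtain z where "of_int D * r = (of_int z :: rat)" using D by blast
      then show ?thesis by (intro exI[of _ "z * e"]) (simp add: ac_simps)
    qed
  qed
qed

lemma zind_indep: assumes z: "zind n b" shows "vs.independent (b ` {..<n})"
proof -
  have inj: "inj_on b {..<n}" using zind_inj[OF z] .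
  have "\<forall>c. (\<Sum>v\<in>b ` {..<n}. scl (c v) v) = 0 \<longrightarrow> (\<forall>v\<in>b ` {..<n}. c v = 0)"
  proof (intro allI impI ballI)
    fix c v assume s: "(\<Sum>v\<in>b ` {..<n}. scl (c v) v) = 0" and v: "v \<in> b ` {..<n}"
    obtain D where D: "D > 0" "\<forall>q\<in>c ` b ` {..<n}. \<exists>z. of_int D * q = (of_int z :: rat)"
      using clear_denoms[of "c ` b ` {..<n}"] by blast
    define z where "z i = (SOME z. of_int D * c (b i) = of_int z)" for i
    have zi: "of_int D * c (b i) = of_int (z i)" if "i < n" for i
      unfolding z_def by (rule someI_ex) (use D that in auto)
    have "(\<Sum>i<n. scl (c (b i)) (b i)) = 0" using s sum.reindex[OF inj, of "\<lambda>v. scl (c v) v"] by simp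
    then have "scl (of_int D) (\<Sum>i<n. scl (c (b i)) (b i)) = 0" by simp
    then have "(\<Sum>i<n. scl (of_int D * c (b i)) (b i)) = 0"
      by (simp add: vs.scale_sum_right)
    then have "(\<Sum>i<n. of_int (z i) * b i) = 0" using zi by (simp add: scl_of_int)
    then have "\<forall>i<n. z i = 0" using z unfolding zind_def by blast
    then have "\<forall>i<n. c (b i) = 0"
    proof (intro allI impI)
      fix i assume i: "i < n" "\<forall>i<n. z i = 0"
      then have "of_int D * c (b i) = 0" using zi[OF i(1)] by simp
      then show "c (b i) = 0" using D(1) by simp
    qed
    then show "c v = 0" using v by auto
  qed
  then show ?thesis using fd.independent_explicit by auto
qed

lemma zsp_span: "zsp n b \<subseteq> vs.span (b ` {..<n})"
proof
  fix x assume "x \<in> zsp n b"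
  then obtain c where x: "x = (\<Sum>i<n. of_int (c i) * b i)" by (auto simp: zsp_def)
  show "x \<in> vs.span (b ` {..<n})" unfolding x
    by (rule vs.span_sum) (metis scl_of_int vs.span_base vs.span_scale image_eqI)
qed

lemma rep_sum_scale:
  assumes B: "vs.independent B" "vs.span B = UNIV"
  shows "vs.representation B (\<Sum>i\<in>S. scl (a i) (v i)) c = (\<Sum>i\<in>S. a i * vs.representation B (v i) c)"
  using vs.representation_sum[OF B(1), of S "\<lambda>i. scl (a i) (v i)"] vs.representation_scale[OF B(1)] B(2)
  by simp

lemma rep_expand:
  assumes B: "vs.independent B" "vs.span B = UNIV" "finite B"
  shows "v = (\<Sum>c\<in>B. scl (vs.representation B v c) c)"
  using vs.sum_representation_eq[OF B(1) _ B(3)] B(2) by simp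

definition tr :: "'a \<Rightarrow> rat" where
  "tr x = (\<Sum>c\<in>Bas. vs.representation Bas (x * c) c)"

lemma Bas_fin: "finite Bas" and Bas_ind: "vs.independent Bas"
  using fd.finite_Basis fd.independent_Basis by auto

lemma tr_change:
  assumes L: "finite L" "vs.independent L" "vs.span L = UNIV"
  shows "tr x = (\<Sum>l\<in>L. vs.representation L (x * l) l)"
proof -
  let ?R1 = "vs.representation Bas" and ?R2 = "vs.representation L"
  have 1: "?R1 (x * c) c = (\<Sum>l\<in>L. ?R2 c l * ?R1 (x * l) c)" for c
  proof -
    have "x * c = x * (\<Sum>l\<in>L. scl (?R2 c l) l)"
      by (rule arg_cong[where f = "\<lambda>v. x * v"]) (rule rep_expand[OF L(2,3,1)])
    also have "\<dots> = (\<Sum>l\<in>L. scl (?R2 c l) (x * l))" by (simp only: sum_distrib_left scl_mult_right)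
    finally have e: "x * c = (\<Sum>l\<in>L. scl (?R2 c l) (x * l))" .
    have "?R1 (x * c) c = ?R1 (\<Sum>l\<in>L. scl (?R2 c l) (x * l)) c"
      by (rule arg_cong[where f = "\<lambda>v. ?R1 v c"]) (rule e)
    also have "\<dots> = (\<Sum>l\<in>L. ?R2 c l * ?R1 (x * l) c)" by (rule rep_sum_scale[OF Bas_ind span_Bas])
    finally show ?thesis .
  qed
  have 2: "?R2 (x * l) l = (\<Sum>c\<in>Bas. ?R1 (x * l) c * ?R2 c l)" for l
  proof -
    have "?R2 (x * l) l = ?R2 (\<Sum>c\<in>Bas. scl (?R1 (x * l) c) c) l"
      by (rule arg_cong[where f = "\<lambda>v. ?R2 v l"]) (rule rep_expand[OF Bas_ind span_Bas Bas_fin])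
    also have "\<dots> = (\<Sum>c\<in>Bas. ?R1 (x * l) c * ?R2 c l)" by (rule rep_sum_scale[OF L(2,3)])
    finally show ?thesis .
  qed
  have "tr x = (\<Sum>c\<in>Bas. \<Sum>l\<in>L. ?R2 c l * ?R1 (x * l) c)" unfolding tr_def
    by (rule sum.cong[OF refl 1])
  also have "\<dots> = (\<Sum>l\<in>L. \<Sum>c\<in>Bas. ?R2 c l * ?R1 (x * l) c)"
    by (rule sum.swap)
  also have "\<dots> = (\<Sum>l\<in>L. \<Sum>c\<in>Bas. ?R1 (x * l) c * ?R2 c l)"
    by (simp only: mult.commute)
  also have "\<dots> = (\<Sum>l\<in>L. ?R2 (x * l) l)" by (rule sum.cong[OF refl 2[symmetric]])
  finally show ?thesis .
qed

lemma rep_idx: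
  fixes n :: nat
  assumes inj: "inj_on b {..<n}" and ind: "vs.independent (b ` {..<n})" and sp: "vs.span (b ` {..<n}) = UNIV"
    and i: "i < n"
  shows "vs.representation (b ` {..<n}) (\<Sum>j<n. scl (f j) (b j)) (b i) = f i"
proof -
  have "vs.representation (b ` {..<n}) (\<Sum>j<n. scl (f j) (b j)) (b i)
      = (\<Sum>j<n. f j * vs.representation (b ` {..<n}) (b j) (b i))"
    by (rule rep_sum_scale[OF ind sp])
  also have "\<dots> = (\<Sum>j<n. if j = i then f j else 0)"
  proof (rule sum.cong)
    fix j assume j: "j \<in> {..<n}"
    have "vs.representation (b ` {..<n}) (b j) = (\<lambda>v. if v = b j then 1 else 0)"
      by (rule vs.representation_basis[OF ind]) (use j in auto)
    then show "f j * vs.representation (b ` {..<n}) (b j) (b i) = (if j = i then f j else 0)"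
      using inj i j by (auto simp: inj_on_def)
  qed simp
  also have "\<dots> = f i" using i by (subst sum.delta) auto
  finally show ?thesis .
qed

lemma tr_int:
  assumes z: "zind n b" and sp: "vs.span (b ` {..<n}) = UNIV"
    and st: "\<And>i. i < n \<Longrightarrow> x * b i \<in> zsp n b"
  shows "tr x \<in> \<int>"
proof -
  have inj: "inj_on b {..<n}" using zind_inj[OF z] .
  have ind: "vs.independent (b ` {..<n})" using zind_indep[OF z] .
  have "tr x = (\<Sum>l\<in>b ` {..<n}. vs.representation (b ` {..<n}) (x * l) l)"
    by (rule tr_change) (use ind sp in auto)
  also have "\<dots> = (\<Sum>i<n. vs.representation (b ` {..<n}) (x * b i) (b i))"
    using sum.reindex[OF inj] by simp
  finally have t: "tr x = (\<Sum>i<n. vs.representation (b ` {..<n}) (x * b i) (b i))" .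
  have "vs.representation (b ` {..<n}) (x * b i) (b i) \<in> \<int>" if i: "i < n" for i
  proof -
    obtain c where c: "x * b i = (\<Sum>j<n. of_int (c j) * b j)" using st[OF i] by (auto simp: zsp_def)
    have "x * b i = (\<Sum>j<n. scl (of_int (c j)) (b j))" unfolding c by (simp add: scl_of_int)
    then have "vs.representation (b ` {..<n}) (x * b i) (b i) = of_int (c i)"
      using rep_idx[OF inj ind sp i, of "\<lambda>j. of_int (c j)"] by simp
    then show ?thesis by simp
  qed
  then show ?thesis unfolding t by (intro Ints_sum) auto
qed

lemma rep_lin_add: "vs.representation Bas (x + y) c = vs.representation Bas x c + vs.representation Bas y c"
  using vs.representation_add[OF Bas_ind] span_Bas by simp

lemma rep_lin_scl: "vs.representation Bas (scl q x) c = q * vs.representation Bas x c"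
  using vs.representation_scale[OF Bas_ind] span_Bas by simp

lemma tr_add: "tr (x + y) = tr x + tr y"
  unfolding tr_def by (simp add: distrib_right rep_lin_add sum.distrib)

lemma tr_scl: "tr (scl q x) = q * tr x"
  unfolding tr_def by (simp add: scl_mult_left rep_lin_scl sum_distrib_left)

lemma tr_1: "tr 1 = of_nat (card Bas)"
proof -
  have "tr 1 = (\<Sum>c\<in>Bas. (1::rat))"
    unfolding tr_def by (rule sum.cong) (auto simp: vs.representation_basis[OF Bas_ind])
  then show ?thesis by simp
qed

lemma card_Bas: "card Bas \<noteq> 0"
proof
  assume "card Bas = 0"
  then have "Bas = {}" using Bas_fin by simp
  then have "vs.span Bas = {0}" by simp
  then show False using span_Bas zero_ne_one_nf by (metis UNIV_I singletonD)
qed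

end

context nf begin

lemma lin_intro:
  assumes "\<And>x y. f (x + y) = f x + f y" "\<And>c x. f (scl c x) = scl c (f x)"
  shows "Vector_Spaces.linear scl scl f"
  unfolding Vector_Spaces.linear_iff using assms vs.vector_space_axioms by blast

lemma inj_surj_sub:
  assumes lin: "Vector_Spaces.linear scl scl f" and fV: "f ` vs.span W \<subseteq> vs.span W" and inj: "inj_on f (vs.span W)"
  shows "vs.span W \<subseteq> f ` vs.span W"
proof -
  interpret p: finite_dimensional_vector_space_pair_1 scl Bas scl ..
  interpret lf: Vector_Spaces.linear scl scl f by (rule lin)
  have "vs.dim (f ` vs.span W) = vs.dim (vs.span W)"
    by (rule p.dim_image_eq[OF lin]) (use inj in \<open>simp only: vs.span_span\<close>)
  moreover have "vs.subspace (f ` vs.span W)" by (rule lf.subspace_image) simp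
  ultimately have "f ` vs.span W = vs.span W"
    using fd.subspace_dim_equal[of "f ` vs.span W" "vs.span W"] fV by simp
  then show ?thesis by simp
qed

lemma indep_coeffs:
  assumes "vs.independent W" "(\<Sum>v\<in>W. scl (c v) v) = 0" "v \<in> W"
  shows "c v = 0"
proof -
  have "\<forall>c. (\<Sum>v\<in>W. scl (c v) v) = 0 \<longrightarrow> (\<forall>v\<in>W. c v = 0)"
    using assms(1) fd.independent_explicit by simp
  then show ?thesis using assms(2,3) by blast
qed

lemma tr_0: "tr 0 = 0" using tr_scl[of 0 0] by simp

lemma tr_sum: "tr (\<Sum>i\<in>S. scl (a i) (v i)) = (\<Sum>i\<in>S. a i * tr (v i))"
  by (induction S rule: infinite_finite_induct) (simp_all add: tr_0 tr_add tr_scl)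

lemma tr_diff: "tr (x - y) = tr x - tr y"
  using tr_add[of "x - y" y] by simp

lemma trace_bound:
  assumes T: "subring T" and trT: "\<And>t. t \<in> T \<Longrightarrow> tr t \<in> \<int>"
  shows "\<exists>e g. T \<subseteq> zsp e g"
proof -
  obtain W where WT: "W \<subseteq> T" and Wind: "vs.independent W" and TW: "T \<subseteq> vs.span W"
    using vs.maximal_independent_subset[of T] by blast
  have Wfin: "finite W" using fd.finiteI_independent[OF Wind] .
  define V where "V = vs.span W"
  have TV: "T \<subseteq> V" using TW V_def by simp
  have WV: "W \<subseteq> V" unfolding V_def by (rule vs.span_superset)
  have Tmult: "x \<in> T \<Longrightarrow> y \<in> T \<Longrightarrow> x * y \<in> T" for x y using T by (simp add: subring_def)
  have mWV: "w \<in> W \<Longrightarrow> y \<in> V \<Longrightarrow> w * y \<in> V" for w y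
  proof -
    assume w: "w \<in> W" and "y \<in> V"
    then have "y \<in> vs.span W" by (simp add: V_def)
    then show "w * y \<in> V"
    proof (induction rule: vs.span_induct_alt)
      case base then show ?case by (simp add: V_def vs.span_zero)
    next
      case (step c x z)
      have "w * x \<in> V" using Tmult WT w step(1) TV by blast
      then have "w * scl c x + w * z \<in> V"
        unfolding V_def scl_mult_right using step(2) V_def by (intro vs.span_add vs.span_scale) auto
      then show ?case by (simp add: distrib_left)
    qed
  qed
  have Vmult: "x \<in> V \<Longrightarrow> y \<in> V \<Longrightarrow> x * y \<in> V" for x y
  proof -
    assume "x \<in> V" and y: "y \<in> V"
    then have "x \<in> vs.span W" by (simp add: V_def)
    then show "x * y \<in> V"
    proof (induction rule: vs.span_induct_alt)
      case base then show ?case by (simp add: V_def vs.span_zero)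
    next
      case (step c x z)
      have "x * y \<in> V" using mWV step(1) y by blast
      then have "scl c x * y + z * y \<in> V"
        unfolding V_def scl_mult_left using step(2) V_def by (intro vs.span_add vs.span_scale) auto
      then show ?case by (simp add: distrib_right)
    qed
  qed
  have oneV: "1 \<in> V" using T TV by (auto simp: subring_def)
  have Vsub: "vs.subspace V" unfolding V_def by simp
  have Vinv: "y \<in> V \<Longrightarrow> y \<noteq> 0 \<Longrightarrow> \<exists>u\<in>V. y * u = 1" for y
  proof -
    assume y: "y \<in> V" "y \<noteq> 0"
    have lin: "Vector_Spaces.linear scl scl (\<lambda>v. y * v)"
      by (rule lin_intro) (simp_all add: distrib_left scl_mult_right)
    have "V \<subseteq> (\<lambda>v. y * v) ` V" unfolding V_def
    proof (rule inj_surj_sub[OF lin])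
      show "(\<lambda>v. y * v) ` vs.span W \<subseteq> vs.span W" using Vmult y V_def by auto
      show "inj_on (\<lambda>v. y * v) (vs.span W)"
        by (rule inj_onI) (use mult_cancel_nf y in blast)
    qed
    then show ?thesis using oneV by force
  qed
  have nondeg: "y \<in> V \<Longrightarrow> (\<And>w. w \<in> W \<Longrightarrow> tr (y * w) = 0) \<Longrightarrow> y = 0" for y
  proof (rule ccontr)
    assume y: "y \<in> V" and tw: "\<And>w. w \<in> W \<Longrightarrow> tr (y * w) = 0" and ny: "y \<noteq> 0"
    have allv: "v \<in> vs.span W \<Longrightarrow> tr (y * v) = 0" for v
    proof (induction rule: vs.span_induct_alt)
      case base then show ?case by (simp add: tr_0)
    next
      case (step c x z)
      then show ?case by (simp add: distrib_left scl_mult_right tr_add tr_scl tw)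
    qed
    obtain u where "u \<in> V" "y * u = 1" using Vinv[OF y ny] by blast
    then have "u \<in> vs.span W" using V_def by simp
    then have "tr (y * u) = 0" by (rule allv)
    then have "tr 1 = 0" using \<open>y * u = 1\<close> by simp
    then show False using tr_1 card_Bas by simp
  qed
  define Th where "Th y = (\<Sum>w\<in>W. scl (tr (y * w)) w)" for y
  have Thlin: "Vector_Spaces.linear scl scl Th"
    by (rule lin_intro)
       (simp_all add: Th_def distrib_right tr_add scl_mult_left tr_scl vs.scale_left_distrib sum.distrib
         vs.scale_sum_right)
  have ThV: "Th ` vs.span W \<subseteq> vs.span W"
  proof (rule image_subsetI)
    fix y show "Th y \<in> vs.span W"
      unfolding Th_def by (rule vs.span_sum) (rule vs.span_scale, rule vs.span_base, assumption)
  qed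
  have Thinj: "inj_on Th (vs.span W)"
  proof (rule inj_onI)
    fix x y assume x: "x \<in> vs.span W" and y: "y \<in> vs.span W" and e: "Th x = Th y"
    interpret lt: Vector_Spaces.linear scl scl Th by (rule Thlin)
    have "Th (x - y) = 0" using e lt.diff by simp
    then have "(\<Sum>w\<in>W. scl (tr ((x - y) * w)) w) = 0" by (simp add: Th_def)
    then have "\<forall>w\<in>W. tr ((x - y) * w) = 0"
      using indep_coeffs[OF Wind, of "\<lambda>w. tr ((x - y) * w)"] by blast
    then have "x - y = 0" using nondeg[of "x - y"] x y V_def vs.span_diff by blast
    then show "x = y" by simp
  qed
  have surj: "V \<subseteq> Th ` V" unfolding V_def by (rule inj_surj_sub[OF Thlin ThV Thinj])
  define du where "du w0 = (SOME d. d \<in> V \<and> Th d = w0)" for w0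
  have du: "w0 \<in> W \<Longrightarrow> du w0 \<in> V \<and> Th (du w0) = w0" for w0
    unfolding du_def by (rule someI_ex) (use surj WV in blast)
  have delta: "w0 \<in> W \<Longrightarrow> w \<in> W \<Longrightarrow> tr (du w0 * w) = (if w = w0 then 1 else 0)" for w0 w
  proof -
    assume w0: "w0 \<in> W" and w: "w \<in> W"
    have s1: "(\<Sum>v\<in>W. scl (if v = w0 then 1 else 0) v) = w0"
    proof -
      have "(\<Sum>v\<in>W. scl (if v = w0 then 1 else 0) v) = (\<Sum>v\<in>W. if v = w0 then w0 else 0)"
        by (rule sum.cong) (auto simp: scl_def qr_1 qr_0)
      also have "\<dots> = w0" using w0 Wfin by simp
      finally show ?thesis .
    qed
    have "(\<Sum>v\<in>W. scl (tr (du w0 * v) - (if v = w0 then 1 else 0)) v) = Th (du w0) - w0"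
      unfolding Th_def using s1 by (simp add: vs.scale_left_diff_distrib sum_subtractf)
    also have "\<dots> = 0" using du[OF w0] by simp
    finally have "\<forall>v\<in>W. tr (du w0 * v) - (if v = w0 then 1 else 0) = 0"
      using indep_coeffs[OF Wind, of "\<lambda>v. tr (du w0 * v) - (if v = w0 then 1 else 0)"] by blast
    then show ?thesis using w by auto
  qed
  obtain h where h: "bij_betw h {0..<card W} W" using ex_bij_betw_nat_finite[OF Wfin] by blast
  define g where "g i = du (h i)" for i
  have "T \<subseteq> zsp (card W) g"
  proof
    fix t assume t: "t \<in> T"
    define z where "z = (\<Sum>w0\<in>W. scl (tr (t * w0)) (du w0))"
    have zV: "z \<in> V" unfolding z_def V_def using du V_def by (auto intro!: vs.span_sum vs.span_scale)
    have "tr ((t - z) * w) = 0" if w: "w \<in> W" for w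
    proof -
      have "tr (z * w) = (\<Sum>w0\<in>W. tr (t * w0) * tr (du w0 * w))"
        unfolding z_def by (simp add: sum_distrib_right scl_mult_left tr_sum)
      also have "\<dots> = (\<Sum>w0\<in>W. if w0 = w then tr (t * w0) else 0)"
        by (rule sum.cong) (use delta w in auto)
      also have "\<dots> = tr (t * w)" using w Wfin by simp
      finally show ?thesis by (simp add: left_diff_distrib tr_diff)
    qed
    then have "t - z = 0" using nondeg[of "t - z"] zV TV t V_def vs.span_diff by blast
    then have tz: "t = z" by simp
    have "\<forall>w0\<in>W. \<exists>k. tr (t * w0) = of_int k"
    proof
      fix w0 assume "w0 \<in> W"
      then have "t * w0 \<in> T" using Tmult t WT by blast
      then have "tr (t * w0) \<in> \<int>" by (rule trT)
      then show "\<exists>k. tr (t * w0) = of_int k" by (auto elim: Ints_cases)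
    qed
    from bchoice[OF this] obtain k where k: "\<And>w0. w0 \<in> W \<Longrightarrow> tr (t * w0) = of_int (k w0)" by blast
    have "z = (\<Sum>w0\<in>W. of_int (k w0) * du w0)" unfolding z_def
      by (rule sum.cong) (simp_all add: k scl_of_int)
    then have "t = (\<Sum>w0\<in>W. of_int (k w0) * du w0)" using tz by simp
    also have "\<dots> = (\<Sum>i\<in>{0..<card W}. of_int (k (h i)) * du (h i))"
      using sum.reindex_bij_betw[OF h, of "\<lambda>w0. of_int (k w0) * du w0"] by simp
    finally have "t = (\<Sum>i<card W. of_int (k (h i)) * g i)" by (simp add: g_def atLeast0LessThan)
    then show "t \<in> zsp (card W) g" by (rule zspI)
  qed
  then show ?thesis by blast
qed

end

lemma zsp_addcl: "addcl (zsp n b)"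
  using zsp_subgroup unfolding additive_subgroup_def addcl_def by blast

lemma zsp_prod:
  fixes g g' :: "nat \<Rightarrow> 'a::comm_ring_1"
  shows "set_mult (zsp m g) (zsp m' g') \<subseteq> zsp (m * m') (\<lambda>k. g (k div m') * g' (k mod m'))"
    (is "_ \<subseteq> zsp _ ?g")
proof (rule sm_least[OF zsp_addcl])
  fix x y assume "x \<in> zsp m g" "y \<in> zsp m' g'"
  then obtain c d where x: "x = (\<Sum>i<m. of_int (c i) * g i)" and y: "y = (\<Sum>j<m'. of_int (d j) * g' j)"
    by (auto simp: zsp_def)
  have "x * y = (\<Sum>i<m. (of_int (c i) * g i) * y)" unfolding x by (rule sum_distrib_right)
  also have "\<dots> = (\<Sum>i<m. \<Sum>j<m'. (of_int (c i) * g i) * (of_int (d j) * g' j))"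
    unfolding y by (simp only: sum_distrib_left)
  also have "\<dots> = (\<Sum>i<m. \<Sum>j<m'. of_int (c i * d j) * (g i * g' j))"
    by (intro sum.cong refl) (simp add: ac_simps)
  also have "\<dots> \<in> zsp (m * m') ?g"
  proof (rule subgroup_sum[OF zsp_subgroup], rule subgroup_sum[OF zsp_subgroup])
    fix i j assume i: "i \<in> {..<m}" and j: "j \<in> {..<m'}"
    have k: "i * m' + j < m * m'"
    proof -
      have "i * m' + j < i * m' + m'" using j by simp
      also have "\<dots> = (i + 1) * m'" by simp
      also have "\<dots> \<le> m * m'" using i by (intro mult_right_mono) auto
      finally show ?thesis .
    qed
    have "?g (i * m' + j) = g i * g' j" using j by simp
    then have "g i * g' j \<in> zsp (m * m') ?g" using zsp_gen[OF k, of ?g] by simp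
    then show "of_int (c i * d j) * (g i * g' j) \<in> zsp (m * m') ?g" by (rule zsp_int_mult)
  qed
  finally show "x * y \<in> zsp (m * m') ?g" .
qed

lemma fin_to_zsp:
  assumes "finite G"
  shows "\<exists>m g. {\<Sum>x\<in>G. of_int (c x) * x | c :: 'a \<Rightarrow> int. True} \<subseteq> zsp m (g :: nat \<Rightarrow> 'a::comm_ring_1)"
proof -
  obtain h where h: "bij_betw h {0..<card G} G" using ex_bij_betw_nat_finite[OF assms] by blast
  have "{\<Sum>x\<in>G. of_int (c x) * x | c :: 'a \<Rightarrow> int. True} \<subseteq> zsp (card G) h"
  proof
    fix u assume "u \<in> {\<Sum>x\<in>G. of_int (c x) * x | c :: 'a \<Rightarrow> int. True}"
    then obtain c :: "'a \<Rightarrow> int" where u: "u = (\<Sum>x\<in>G. of_int (c x) * x)" by blast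
    have "u = (\<Sum>i\<in>{0..<card G}. of_int (c (h i)) * h i)"
      unfolding u using sum.reindex_bij_betw[OF h, of "\<lambda>x. of_int (c x) * x"] by simp
    then show "u \<in> zsp (card G) h" by (intro zspI) (simp add: atLeast0LessThan)
  qed
  then show ?thesis by blast
qed

lemma ex_common_bound:
  fixes n :: nat and P :: "nat \<Rightarrow> nat \<Rightarrow> bool"
  assumes "\<And>i. i < n \<Longrightarrow> \<exists>k. P i k" and mono: "\<And>i k k'. P i k \<Longrightarrow> k \<le> k' \<Longrightarrow> P i k'"
  shows "\<exists>K::nat. \<forall>i<n. P i K"
proof -
  have "\<exists>K::nat. \<forall>i<m. P i K" if "m \<le> n" for m
    using that
  proof (induction m)
    case 0 then show ?case by simp
  next
    case (Suc m)
    then obtain K where K: "\<forall>i<m. P i K" by auto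
    have "m < n" using Suc.prems by simp
    then obtain k where k: "P m k" using assms(1) by blast
    have "\<forall>i<Suc m. P i (max K k)"
      using K k mono by (auto simp: less_Suc_eq intro: max.cobounded1 max.cobounded2)
    then show ?case by blast
  qed
  then show ?thesis by blast
qed

context nf begin

lemma part4:
  fixes I :: "'a set"
  assumes I: "additive_subgroup I" and fg: "fin_gen I" and nz: "I \<noteq> {0}"
  shows "(\<exists>n. blowup I = Ok I n) \<and> is_order (blowup I)"
proof -
  obtain G where G: "finite G" "I = {\<Sum>g\<in>G. of_int (c g) * g | c :: 'a \<Rightarrow> int. True}"
    using fg unfolding fin_gen_def by blast
  obtain m0 g0 where Isub: "I \<subseteq> zsp m0 g0" using fin_to_zsp[OF G(1)] G(2) by blast
  have powsub: "\<exists>m g. set_pow I (Suc j) \<subseteq> zsp m g" for j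
  proof (induction j)
    case 0 then show ?case using Isub set_pow_1[OF I] by auto
  next
    case (Suc j)
    then obtain m g where mg: "set_pow I (Suc j) \<subseteq> zsp m g" by blast
    have "set_pow I (Suc (Suc j)) \<subseteq> set_mult (zsp m g) (zsp m0 g0)"
      using sm_mono[OF mg Isub] by simp
    also have "\<dots> \<subseteq> zsp (m * m0) (\<lambda>k. g (k div m0) * g0 (k mod m0))" by (rule zsp_prod)
    finally show ?case by blast
  qed
  obtain a where a: "a \<in> I" "a \<noteq> 0" using nz I unfolding additive_subgroup_def by blast
  have apow: "a ^ Suc j \<in> set_pow I (Suc j)" for j
  proof (induction j)
    case 0 then show ?case using a set_pow_1[OF I] by simp
  next
    case (Suc j)
    have "a ^ Suc j * a \<in> set_mult (set_pow I (Suc j)) I" by (rule sm_prod[OF Suc a(1)])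
    then show ?case by (simp add: mult.commute)
  qed
  have apow0: "a ^ k \<noteq> 0" for k
    by (induction k) (use a no_zd zero_ne_one_nf in \<open>auto\<close>)
  obtain hB where hB: "bij_betw hB {0..<card Bas} Bas" using ex_bij_betw_nat_finite[OF Bas_fin] by blast
  define L0 where "L0 = zsp (card Bas) hB"
  have BasL0: "c \<in> Bas \<Longrightarrow> c \<in> L0" for c
  proof -
    assume "c \<in> Bas"
    then have "c \<in> hB ` {0..<card Bas}" using hB unfolding bij_betw_def by simp
    then obtain i where "i \<in> {0..<card Bas}" "c = hB i" by blast
    then have "i < card Bas" "c = hB i" by auto
    then show "c \<in> L0" unfolding L0_def using zsp_gen by blast
  qed
  have trint: "tr t \<in> \<int>" if t: "t \<in> Ok I (Suc j)" for t j
  proof -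
    define P where "P = set_pow I (Suc j)"
    define Lam where "Lam = set_mult P L0"
    obtain m g where "P \<subseteq> zsp m g" using powsub P_def by blast
    then have "Lam \<subseteq> zsp (m * card Bas) (\<lambda>k. g (k div card Bas) * hB (k mod card Bas))"
      unfolding Lam_def L0_def using sm_mono[of P "zsp m g" "zsp (card Bas) hB" "zsp (card Bas) hB"] zsp_prod
      by blast
    moreover have "additive_subgroup Lam" unfolding Lam_def P_def by (rule sm_subgroup[OF set_pow_subgroup[OF I]])
    ultimately obtain n lam where zl: "zind n lam" and Leq: "Lam = zsp n lam"
      using free_sub by blast
    have tP: "\<forall>x\<in>P. t * x \<in> P" using t unfolding P_def colon_def by blast
    have stab: "t * lam i \<in> zsp n lam" if "i < n" for i
    proof -
      have "lam i \<in> Lam" using Leq zsp_gen[OF that] by simp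
      then have "t * lam i \<in> Lam" unfolding Lam_def by (rule sm_scal[OF tP])
      then show ?thesis using Leq by simp
    qed
    have sp: "vs.span (lam ` {..<n}) = UNIV"
    proof -
      have "x \<in> vs.span (lam ` {..<n})" for x
      proof -
        define p where "p = a ^ Suc j"
        have p0: "p \<noteq> 0" unfolding p_def by (rule apow0)
        have pP: "p \<in> P" unfolding p_def P_def by (rule apow)
        define x' where "x' = inv p * x"
        have xx: "x = p * x'" unfolding x'_def using inv_r[OF p0] by (simp add: mult.assoc[symmetric])
        have "x' = (\<Sum>c\<in>Bas. scl (vs.representation Bas x' c) c)"
          by (rule rep_expand[OF Bas_ind span_Bas Bas_fin])
        then have "x = (\<Sum>c\<in>Bas. scl (vs.representation Bas x' c) (p * c))"
          unfolding xx by (metis (no_types, lifting) scl_mult_right sum.cong sum_distrib_left)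
        also have "\<dots> \<in> vs.span (lam ` {..<n})"
        proof (rule vs.span_sum, rule vs.span_scale)
          fix c assume "c \<in> Bas"
          then have "p * c \<in> Lam" unfolding Lam_def using sm_prod[OF pP BasL0] by blast
          then show "p * c \<in> vs.span (lam ` {..<n})" using Leq zsp_span by blast
        qed
        finally show ?thesis .
      qed
      then show ?thesis by blast
    qed
    show ?thesis by (rule tr_int[OF zl sp stab])
  qed
  have trT: "tr t \<in> \<int>" if tb: "t \<in> blowup I" for t
  proof -
    obtain k where "t \<in> Ok I k" using tb unfolding blowup_def by blast
    then have "t \<in> Ok I (Suc k)" using O_Suc by blast
    then show ?thesis by (rule trint)
  qed
  have sr: "subring (blowup I)" by (rule blowup_subring[OF I])
  obtain e g where "blowup I \<subseteq> zsp e g" using trace_bound[OF sr trT] by blast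
  moreover have sgT: "additive_subgroup (blowup I)" using sr unfolding subring_def by blast
  ultimately obtain n b where zb: "zind n b" and Teq: "blowup I = zsp n b"
    using free_sub by blast
  have "\<exists>K. \<forall>i<n. b i \<in> Ok I K"
  proof (rule ex_common_bound)
    fix i assume "i < n"
    then have "b i \<in> blowup I" using Teq zsp_gen by blast
    then show "\<exists>k. b i \<in> Ok I k" unfolding blowup_def by blast
  next
    fix i k k' assume "b i \<in> Ok I k" "k \<le> k'"
    then show "b i \<in> Ok I k'" using O_mono by blast
  qed
  then obtain K where K: "\<forall>i<n. b i \<in> Ok I K" by blast
  have "zsp n b \<subseteq> Ok I K"
    by (rule zsp_least) (use K colon_subring[OF set_pow_subgroup[OF I]] in \<open>auto simp: subring_def\<close>)
  moreover have "Ok I K \<subseteq> blowup I" unfolding blowup_def by blast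
  ultimately have eqK: "blowup I = Ok I K" using Teq by blast
  have bij: "bij_betw (\<lambda>c. \<Sum>i<n. of_int (c i) * b i) {c :: nat \<Rightarrow> int. \<forall>i\<ge>n. c i = 0} (blowup I)"
    unfolding bij_betw_def
  proof
    show "inj_on (\<lambda>c. \<Sum>i<n. of_int (c i) * b i) {c. \<forall>i\<ge>n. c i = 0}"
    proof (rule inj_onI)
      fix c c' assume c: "c \<in> {c :: nat \<Rightarrow> int. \<forall>i\<ge>n. c i = 0}" and c': "c' \<in> {c :: nat \<Rightarrow> int. \<forall>i\<ge>n. c i = 0}"
        and e: "(\<Sum>i<n. of_int (c i) * b i) = (\<Sum>i<n. of_int (c' i) * b i)"
      have s0: "(\<Sum>i<n. of_int (c i - c' i) * b i) = 0"
        using e by (simp add: left_diff_distrib sum_subtractf)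
      have "\<forall>i<n. c i - c' i = 0"
        using zb[unfolded zind_def, rule_format, OF s0] by blast
      show "c = c'"
      proof (rule ext)
        fix i show "c i = c' i"
        proof (cases "i < n")
          case True then show ?thesis using \<open>\<forall>i<n. c i - c' i = 0\<close> by simp
        next
          case False then show ?thesis using c c' by simp
        qed
      qed
    qed
    show "(\<lambda>c. \<Sum>i<n. of_int (c i) * b i) ` {c. \<forall>i\<ge>n. c i = 0} = blowup I"
    proof
      show "(\<lambda>c. \<Sum>i<n. of_int (c i) * b i) ` {c. \<forall>i\<ge>n. c i = 0} \<subseteq> blowup I"
        using Teq zspI by blast
      show "blowup I \<subseteq> (\<lambda>c. \<Sum>i<n. of_int (c i) * b i) ` {c. \<forall>i\<ge>n. c i = 0}"
      proof
        fix x assume "x \<in> blowup I"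
        then obtain c where x: "x = (\<Sum>i<n. of_int (c i) * b i)" using Teq by (auto simp: zsp_def)
        define c' where "c' i = (if i < n then c i else 0)" for i
        have "x = (\<Sum>i<n. of_int (c' i) * b i)" unfolding x c'_def by simp
        moreover have "c' \<in> {c. \<forall>i\<ge>n. c i = 0}" by (simp add: c'_def)
        ultimately show "x \<in> (\<lambda>c. \<Sum>i<n. of_int (c i) * b i) ` {c. \<forall>i\<ge>n. c i = 0}" by blast
      qed
    qed
  qed
  have "is_order (blowup I)"
    unfolding is_order_def using sr zero_ne_one_nf no_zd bij by blast
  then show ?thesis using eqK by blast
qed

end

theorem proposition4p37:
  fixes I :: "'a::comm_ring_1 set"
  assumes "additive_subgroup I"
  shows "subring (blowup I)
    \<and> (\<forall>R. subring R \<and> invertible_ideal R (set_mult R I) \<longrightarrow> blowup I \<subseteq> R)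
    \<and> (\<forall>n. invertible_ideal (colon (set_pow I n) (set_pow I n))
              (set_mult (colon (set_pow I n) (set_pow I n)) I)
           \<longrightarrow> colon (set_pow I n) (set_pow I n) = blowup I)
    \<and> (number_field_type TYPE('a) \<and> fin_gen I \<and> I \<noteq> {0} \<longrightarrow>
         (\<exists>n. blowup I = colon (set_pow I n) (set_pow I n)) \<and> is_order (blowup I))"
proof -
  have p4: "number_field_type TYPE('a) \<and> fin_gen I \<and> I \<noteq> {0} \<longrightarrow>
         (\<exists>n. blowup I = colon (set_pow I n) (set_pow I n)) \<and> is_order (blowup I)"
  proof
    assume h: "number_field_type TYPE('a) \<and> fin_gen I \<and> I \<noteq> {0}"
    then obtain B :: "'a set" where B: "finite B"
      "\<forall>x::'a. \<exists>(d::int) (c::'a \<Rightarrow> int). d \<noteq> 0 \<and> of_int d * x = (\<Sum>b\<in>B. of_int (c b) * b)"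
      and z1: "(0::'a) \<noteq> 1" and iv: "\<forall>x::'a. x \<noteq> 0 \<longrightarrow> (\<exists>y. x * y = 1)"
      and c0: "\<forall>n::nat. (of_nat n :: 'a) = 0 \<longrightarrow> n = 0"
      unfolding number_field_type_def by blast
    have nfB: "nf B" unfolding nf_def using B z1 iv c0 by blast
    show "(\<exists>n. blowup I = colon (set_pow I n) (set_pow I n)) \<and> is_order (blowup I)"
      using nf.part4[OF nfB assms] h by blast
  qed
  show ?thesis using blowup_subring[OF assms] blowup_le[OF assms] blowup_eq[OF assms] p4 by blast
qed

end
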